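(* Let $R$ be a ring. Then $R$ is D-regularly nil clean if, and only if, the quotient ring $R/J(R)$ is D-regularly nil clean and the Jacobson radical $J(R)$ is a nil ideal.
   Context: All rings are associative with identity $1\neq 0$. $Id(R)$ denotes the set of idempotents of $R$, $Nil(R)$ the set of nilpotent elements, $J(R)$ the Jacobson radical. A ring $R$ is called D-regularly nil clean if for each $a\in R$ there exists an idempotent $e\in aRa\cap Id(R)$ such that $a(1-e)\in Nil(R)$. *)

theory Defs
  imports "HOL-Algebra.QuotRing"
begin

definition idems :: "('a, 'b) ring_scheme \<Rightarrow> 'a set" where
  "idems S = {e \<in> carrier S. e \<otimes>\<^bsub>S\<^esub> e = e}"

definition nilps :: "('a, 'b) ring_scheme \<Rightarrow> 'a set" where
  "nilps S = {x \<in> carrier S. \<exists>n::nat. x [^]\<^bsub>S\<^esub> n = \<zero>\<^bsub>S\<^esub>}"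

definition left_ideal :: "('a, 'b) ring_scheme \<Rightarrow> 'a set \<Rightarrow> bool" where
  "left_ideal S I \<longleftrightarrow> additive_subgroup I S \<and>
     (\<forall>a\<in>carrier S. \<forall>x\<in>I. a \<otimes>\<^bsub>S\<^esub> x \<in> I)"

definition maximal_left_ideal :: "('a, 'b) ring_scheme \<Rightarrow> 'a set \<Rightarrow> bool" where
  "maximal_left_ideal S I \<longleftrightarrow> left_ideal S I \<and> I \<noteq> carrier S \<and>
     (\<forall>K. left_ideal S K \<and> I \<subseteq> K \<longrightarrow> K = I \<or> K = carrier S)"

definition jacobson :: "('a, 'b) ring_scheme \<Rightarrow> 'a set" where
  "jacobson S = carrier S \<inter> \<Inter> {I. maximal_left_ideal S I}"

definition D_regularly_nil_clean :: "('a, 'b) ring_scheme \<Rightarrow> bool" where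
  "D_regularly_nil_clean S \<longleftrightarrow>
     (\<forall>a\<in>carrier S. \<exists>e \<in> {a \<otimes>\<^bsub>S\<^esub> r \<otimes>\<^bsub>S\<^esub> a | r. r \<in> carrier S} \<inter> idems S.
        a \<otimes>\<^bsub>S\<^esub> (\<one>\<^bsub>S\<^esub> \<ominus>\<^bsub>S\<^esub> e) \<in> nilps S)"

definition nil_ideal :: "('a, 'b) ring_scheme \<Rightarrow> 'a set \<Rightarrow> bool" where
  "nil_ideal S I \<longleftrightarrow> I \<subseteq> nilps S"

end

theory Submission
  imports Defs "HOL-Algebra.Subrings"
begin

context ring begin

lemma left_idealI:
  assumes "K \<subseteq> carrier R" "\<zero> \<in> K"
    "\<And>a b. a \<in> K \<Longrightarrow> b \<in> K \<Longrightarrow> a \<oplus> b \<in> K"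
    "\<And>a. a \<in> K \<Longrightarrow> \<ominus> a \<in> K"
    "\<And>r a. r \<in> carrier R \<Longrightarrow> a \<in> K \<Longrightarrow> r \<otimes> a \<in> K"
  shows "left_ideal R K"
  unfolding left_ideal_def
proof (intro conjI ballI)
  show "additive_subgroup K R"
    apply (rule additive_subgroupI)
    apply (rule add.subgroupI)
    using assms by (auto simp: a_inv_def)
qed (use assms in auto)

lemma left_idealD:
  assumes "left_ideal R K"
  shows "K \<subseteq> carrier R" "\<zero> \<in> K"
    "\<And>a b. a \<in> K \<Longrightarrow> b \<in> K \<Longrightarrow> a \<oplus> b \<in> K"
    "\<And>a. a \<in> K \<Longrightarrow> \<ominus> a \<in> K"
    "\<And>r a. r \<in> carrier R \<Longrightarrow> a \<in> K \<Longrightarrow> r \<otimes> a \<in> K"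
  using assms unfolding left_ideal_def
  by (auto simp: additive_subgroup.a_subset additive_subgroup.a_closed
      additive_subgroup.zero_closed additive_subgroup.a_inv_closed)

lemma left_ideal_minus:
  assumes "left_ideal R K" "a \<in> K" "b \<in> K" shows "a \<ominus> b \<in> K"
  using left_idealD[OF assms(1)] assms(2,3) by (simp add: minus_eq)

lemma left_ideal_one:
  assumes "left_ideal R K" "\<one> \<in> K" shows "K = carrier R"
proof
  show "K \<subseteq> carrier R" using left_idealD(1)[OF assms(1)] .
  show "carrier R \<subseteq> K"
  proof
    fix r assume r: "r \<in> carrier R"
    then have "r \<otimes> \<one> \<in> K" using left_idealD(5)[OF assms(1)] assms(2) by blast
    then show "r \<in> K" using r by simp
  qed
qed

lemma exists_max_left_ideal:
  assumes I: "left_ideal R I" and one: "\<one> \<notin> I"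
  shows "\<exists>M. maximal_left_ideal R M \<and> I \<subseteq> M"
proof -
  let ?A = "{K. left_ideal R K \<and> I \<subseteq> K \<and> \<one> \<notin> K}"
  have "\<forall>C\<in>chains ?A. \<exists>U\<in>?A. \<forall>X\<in>C. X \<subseteq> U"
  proof
    fix C assume C: "C \<in> chains ?A"
    have CA: "C \<subseteq> ?A" using chainsD2[OF C] .
    show "\<exists>U\<in>?A. \<forall>X\<in>C. X \<subseteq> U"
    proof (cases "C = {}")
      case True
      then show ?thesis using I one by auto
    next
      case False
      then obtain X0 where X0: "X0 \<in> C" by auto
      have "left_ideal R (\<Union>C)"
      proof (rule left_idealI)
        show "\<Union>C \<subseteq> carrier R" using CA left_idealD(1) by blast
        show "\<zero> \<in> \<Union>C" using X0 CA left_idealD(2) by blast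
        show "a \<oplus> b \<in> \<Union>C" if ab: "a \<in> \<Union>C" "b \<in> \<Union>C" for a b
        proof -
          obtain X Y where XY: "X \<in> C" "Y \<in> C" "a \<in> X" "b \<in> Y" using ab by auto
          show ?thesis
          proof (cases "X \<subseteq> Y")
            case True
            then show ?thesis using XY CA left_idealD(3)[of Y a b] by blast
          next
            case False
            then have "Y \<subseteq> X" using chainsD[OF C XY(1,2)] by blast
            then show ?thesis using XY CA left_idealD(3)[of X a b] by blast
          qed
        qed
        show "\<ominus> a \<in> \<Union>C" if "a \<in> \<Union>C" for a
          using that CA left_idealD(4) by blast
        show "r \<otimes> a \<in> \<Union>C" if "r \<in> carrier R" "a \<in> \<Union>C" for r a
          using that CA left_idealD(5) by blast
      qed
      moreover have "I \<subseteq> \<Union>C" using X0 CA by blast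
      moreover have "\<one> \<notin> \<Union>C" using CA by blast
      ultimately show ?thesis by blast
    qed
  qed
  from Zorn_Lemma2[OF this] obtain M where M: "M \<in> ?A" "\<forall>X\<in>?A. M \<subseteq> X \<longrightarrow> X = M"
    by blast
  have "maximal_left_ideal R M"
    unfolding maximal_left_ideal_def
  proof (intro conjI allI impI)
    show "left_ideal R M" using M by blast
    show "M \<noteq> carrier R" using M by auto
    fix K assume K: "left_ideal R K \<and> M \<subseteq> K"
    show "K = M \<or> K = carrier R"
    proof (cases "\<one> \<in> K")
      case True then show ?thesis using left_ideal_one K by blast
    next
      case False then show ?thesis using K M by blast
    qed
  qed
  then show ?thesis using M by blast
qed


lemma max_ideal_contains_J:
  "maximal_left_ideal R M \<Longrightarrow> jacobson R \<subseteq> M"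
  unfolding jacobson_def by blast

lemma J_left_ideal: "left_ideal R (jacobson R)"
proof (rule left_idealI)
  show "jacobson R \<subseteq> carrier R" unfolding jacobson_def by blast
  have MLI: "\<And>M. maximal_left_ideal R M \<Longrightarrow> left_ideal R M"
    unfolding maximal_left_ideal_def by blast
  show "\<zero> \<in> jacobson R" unfolding jacobson_def using MLI left_idealD(2) by blast
  show "a \<oplus> b \<in> jacobson R" if "a \<in> jacobson R" "b \<in> jacobson R" for a b
    using that MLI left_idealD(3) unfolding jacobson_def by blast
  show "\<ominus> a \<in> jacobson R" if "a \<in> jacobson R" for a
    using that MLI left_idealD(4) unfolding jacobson_def by blast
  show "r \<otimes> a \<in> jacobson R" if "r \<in> carrier R" "a \<in> jacobson R" for r a
    using that MLI left_idealD(5) unfolding jacobson_def by blast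
qed


lemma max_right_closed:
  assumes M: "maximal_left_ideal R M" and x: "x \<in> jacobson R" and s: "s \<in> carrier R"
  shows "x \<otimes> s \<in> M"
proof -
  have MLq: "left_ideal R M" using M unfolding maximal_left_ideal_def by blast
  have MP: "M \<noteq> carrier R" using M unfolding maximal_left_ideal_def by blast
  have xc: "x \<in> carrier R" using x unfolding jacobson_def by blast
  define M' where "M' = {r \<in> carrier R. r \<otimes> s \<in> M}"
  show ?thesis
  proof (cases "M' = carrier R")
    case True then show ?thesis using xc unfolding M'_def by blast
  next
    case False
    have M'L: "left_ideal R M'"
    proof (rule left_idealI)
      show "M' \<subseteq> carrier R" unfolding M'_def by blast
      show "\<zero> \<in> M'" unfolding M'_def using s left_idealD(2)[OF MLq] by simp
      show "a \<oplus> b \<in> M'" if hyp: "a \<in> M'" "b \<in> M'" for a b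
        using hyp s left_idealD(3)[OF MLq] unfolding M'_def by (simp add: l_distr)
      show "\<ominus> a \<in> M'" if hyp: "a \<in> M'" for a
        using hyp s left_idealD(4)[OF MLq] unfolding M'_def by (simp add: l_minus)
      show "r \<otimes> a \<in> M'" if hyp: "r \<in> carrier R" "a \<in> M'" for r a
        using hyp s left_idealD(5)[OF MLq] unfolding M'_def by (simp add: m_assoc)
    qed
    have "maximal_left_ideal R M'"
      unfolding maximal_left_ideal_def
    proof (intro conjI allI impI)
      show "left_ideal R M'" by fact
      show "M' \<noteq> carrier R" by fact
      fix K assume K: "left_ideal R K \<and> M' \<subseteq> K"
      show "K = M' \<or> K = carrier R"
      proof (cases "K = M'")
        case True then show ?thesis by blast
      next
        case False
        then obtain k where k: "k \<in> K" "k \<notin> M'" using K by blast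
        have kc: "k \<in> carrier R" using k K left_idealD(1) by blast
        have ksM: "k \<otimes> s \<notin> M" using k kc unfolding M'_def by blast
        define N where "N = {m \<oplus> t \<otimes> (k \<otimes> s) | m t. m \<in> M \<and> t \<in> carrier R}"
        have ks: "k \<otimes> s \<in> carrier R" using kc s by simp
        have NL: "left_ideal R N"
        proof (rule left_idealI)
          show "N \<subseteq> carrier R" unfolding N_def using left_idealD(1)[OF MLq] ks by auto
          show "\<zero> \<in> N" unfolding N_def using left_idealD(2)[OF MLq] ks
            by (auto intro!: exI[of _ \<zero>] simp: )
          show "a \<oplus> b \<in> N" if hyp: "a \<in> N" "b \<in> N" for a b
          proof -
            obtain m1 t1 where 1: "a = m1 \<oplus> t1 \<otimes> (k \<otimes> s)" "m1 \<in> M" "t1 \<in> carrier R"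
              using hyp(1) unfolding N_def by blast
            obtain m2 t2 where 2: "b = m2 \<oplus> t2 \<otimes> (k \<otimes> s)" "m2 \<in> M" "t2 \<in> carrier R"
              using hyp(2) unfolding N_def by blast
            have m: "m1 \<in> carrier R" "m2 \<in> carrier R" using 1 2 left_idealD(1)[OF MLq] by auto
            have "a \<oplus> b = (m1 \<oplus> m2) \<oplus> (t1 \<oplus> t2) \<otimes> (k \<otimes> s)"
              using 1 2 m ks by algebra
            then show ?thesis unfolding N_def using 1 2 left_idealD(3)[OF MLq] by blast
          qed
          show "\<ominus> a \<in> N" if hyp: "a \<in> N" for a
          proof -
            obtain m1 t1 where 1: "a = m1 \<oplus> t1 \<otimes> (k \<otimes> s)" "m1 \<in> M" "t1 \<in> carrier R"
              using hyp(1) unfolding N_def by blast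
            have m: "m1 \<in> carrier R" using 1 left_idealD(1)[OF MLq] by auto
            have "\<ominus> a = (\<ominus> m1) \<oplus> (\<ominus> t1) \<otimes> (k \<otimes> s)"
              using 1 m ks by algebra
            then show ?thesis unfolding N_def using 1 left_idealD(4)[OF MLq] by blast
          qed
          show "r \<otimes> a \<in> N" if hyp: "r \<in> carrier R" "a \<in> N" for r a
          proof -
            obtain m1 t1 where 1: "a = m1 \<oplus> t1 \<otimes> (k \<otimes> s)" "m1 \<in> M" "t1 \<in> carrier R"
              using hyp(2) unfolding N_def by blast
            have m: "m1 \<in> carrier R" using 1 left_idealD(1)[OF MLq] by auto
            have "r \<otimes> a = (r \<otimes> m1) \<oplus> (r \<otimes> t1) \<otimes> (k \<otimes> s)"
              using 1 m ks hyp(1) by algebra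
            then show ?thesis unfolding N_def using 1 hyp(1) left_idealD(5)[OF MLq] by blast
          qed
        qed
        have MN: "M \<subseteq> N"
        proof
          fix m assume "m \<in> M"
          moreover have "m \<in> carrier R" using \<open>m \<in> M\<close> left_idealD(1)[OF MLq] by auto
          ultimately have "m = m \<oplus> \<zero> \<otimes> (k \<otimes> s)" "m \<in> M" using ks by auto
          then show "m \<in> N" unfolding N_def by blast
        qed
        have "k \<otimes> s = \<zero> \<oplus> \<one> \<otimes> (k \<otimes> s)" using ks by simp
        then have "k \<otimes> s \<in> N" unfolding N_def using left_idealD(2)[OF MLq] by blast
        then have "N \<noteq> M" using ksM by blast
        then have "N = carrier R" using M NL MN unfolding maximal_left_ideal_def by blast
        then obtain m t where mt: "\<one> = m \<oplus> t \<otimes> (k \<otimes> s)" "m \<in> M" "t \<in> carrier R"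
          unfolding N_def by blast
        have mc: "m \<in> carrier R" using mt left_idealD(1)[OF MLq] by auto
        show ?thesis
        proof (rule disjI2, rule left_ideal_one)
          show "left_ideal R K" using K by blast
          have "\<one> \<ominus> (s \<otimes> t) \<otimes> k \<in> M'"
          proof -
            have "(\<one> \<ominus> (s \<otimes> t) \<otimes> k) \<otimes> s = s \<otimes> (\<one> \<ominus> t \<otimes> (k \<otimes> s))"
              using mt(3) kc s by (simp add: minus_eq l_distr r_distr l_minus r_minus m_assoc)
            also have "\<dots> = s \<otimes> (m \<oplus> t \<otimes> (k \<otimes> s) \<ominus> t \<otimes> (k \<otimes> s))"
              using mt(1) by simp
            also have "\<dots> = s \<otimes> m" using mc mt(3) kc s by algebra
            finally have "(\<one> \<ominus> (s \<otimes> t) \<otimes> k) \<otimes> s \<in> M"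
              using left_idealD(5)[OF MLq s mt(2)] by simp
            then show ?thesis unfolding M'_def using s mt(3) kc by simp
          qed
          then have 1: "\<one> \<ominus> (s \<otimes> t) \<otimes> k \<in> K" using K by blast
          have 2: "(s \<otimes> t) \<otimes> k \<in> K" using left_idealD(5)[of K "s \<otimes> t" k] K k s mt(3) by simp
          have "\<one> = (\<one> \<ominus> (s \<otimes> t) \<otimes> k) \<oplus> (s \<otimes> t) \<otimes> k" using s mt(3) kc by algebra
          then show "\<one> \<in> K" using left_idealD(3)[of K, OF _ 1 2] K by simp
        qed
      qed
    qed
    then have "jacobson R \<subseteq> M'" by (rule max_ideal_contains_J)
    then show ?thesis using x unfolding M'_def by blast
  qed
qed

lemma J_right_closed:
  assumes x: "x \<in> jacobson R" and s: "s \<in> carrier R"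
  shows "x \<otimes> s \<in> jacobson R"
  using max_right_closed[OF _ x s] x s unfolding jacobson_def by auto

lemma J_ideal: "ideal (jacobson R) R"
proof (rule idealI)
  show "ring R" by (rule ring_axioms)
  have L: "left_ideal R (jacobson R)" by (rule J_left_ideal)
  show "subgroup (jacobson R) (add_monoid R)"
    using L unfolding left_ideal_def additive_subgroup_def by blast
  show "\<And>a x. a \<in> jacobson R \<Longrightarrow> x \<in> carrier R \<Longrightarrow> x \<otimes> a \<in> jacobson R"
    using left_idealD(5)[OF L] by blast
  show "\<And>a x. a \<in> jacobson R \<Longrightarrow> x \<in> carrier R \<Longrightarrow> a \<otimes> x \<in> jacobson R"
    by (rule J_right_closed)
qed

lemma J_idem_zero:
  assumes e: "e \<in> jacobson R" and idem: "e \<otimes> e = e"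
  shows "e = \<zero>"
proof -
  have ec: "e \<in> carrier R" using e unfolding jacobson_def by blast
  define L where "L = {r \<otimes> (\<one> \<ominus> e) | r. r \<in> carrier R}"
  have LL: "left_ideal R L"
  proof (rule left_idealI)
    show "L \<subseteq> carrier R" unfolding L_def using ec by auto
    have "\<zero> = \<zero> \<otimes> (\<one> \<ominus> e)" using ec by simp
    then show "\<zero> \<in> L" unfolding L_def by blast
    show "a \<oplus> b \<in> L" if hyp: "a \<in> L" "b \<in> L" for a b
    proof -
      obtain r1 r2 where "a = r1 \<otimes> (\<one> \<ominus> e)" "b = r2 \<otimes> (\<one> \<ominus> e)" "r1 \<in> carrier R" "r2 \<in> carrier R"
        using hyp unfolding L_def by blast
      then have "a \<oplus> b = (r1 \<oplus> r2) \<otimes> (\<one> \<ominus> e)" "r1 \<oplus> r2 \<in> carrier R" using ec by (simp_all add: l_distr)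
      then show ?thesis unfolding L_def by blast
    qed
    show "\<ominus> a \<in> L" if hyp: "a \<in> L" for a
    proof -
      obtain r1 where "a = r1 \<otimes> (\<one> \<ominus> e)" "r1 \<in> carrier R"
        using hyp unfolding L_def by blast
      then have "\<ominus> a = (\<ominus> r1) \<otimes> (\<one> \<ominus> e)" "\<ominus> r1 \<in> carrier R" using ec by (simp_all add: l_minus)
      then show ?thesis unfolding L_def by blast
    qed
    show "r \<otimes> a \<in> L" if hyp: "r \<in> carrier R" "a \<in> L" for r a
    proof -
      obtain r1 where "a = r1 \<otimes> (\<one> \<ominus> e)" "r1 \<in> carrier R"
        using hyp unfolding L_def by blast
      then have "r \<otimes> a = (r \<otimes> r1) \<otimes> (\<one> \<ominus> e)" "r \<otimes> r1 \<in> carrier R" using ec hyp(1) by (simp_all add: m_assoc)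
      then show ?thesis unfolding L_def by blast
    qed
  qed
  show ?thesis
  proof (cases "\<one> \<in> L")
    case True
    then obtain r where r: "\<one> = r \<otimes> (\<one> \<ominus> e)" "r \<in> carrier R" unfolding L_def by blast
    have "e = (r \<otimes> (\<one> \<ominus> e)) \<otimes> e" using r(1) ec by simp
    also have "\<dots> = r \<otimes> (e \<ominus> e \<otimes> e)" using r(2) ec by algebra
    also have "\<dots> = \<zero>" using idem r(2) ec by (simp add: minus_eq r_neg)
    finally show ?thesis .
  next
    case False
    obtain M where M: "maximal_left_ideal R M" "L \<subseteq> M" using exists_max_left_ideal[OF LL False] by blast
    have MLq: "left_ideal R M" using M unfolding maximal_left_ideal_def by blast
    have "e \<in> M" using max_ideal_contains_J[OF M(1)] e by blast
    moreover have "\<one> \<ominus> e \<in> M"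
    proof -
      have "\<one> \<ominus> e = \<one> \<otimes> (\<one> \<ominus> e)" using ec by simp
      then show ?thesis using M(2) unfolding L_def by blast
    qed
    ultimately have "(\<one> \<ominus> e) \<oplus> e \<in> M" using left_idealD(3)[OF MLq] by blast
    moreover have "(\<one> \<ominus> e) \<oplus> e = \<one>" using ec by algebra
    ultimately have "\<one> \<in> M" by simp
    then have "M = carrier R" by (rule left_ideal_one[OF MLq])
    then show ?thesis using M(1) unfolding maximal_left_ideal_def by blast
  qed
qed
end

context cring begin
lemma step_comm:
  assumes f: "f \<in> carrier R"
  defines "x \<equiv> f \<otimes> f \<ominus> f" and "w \<equiv> \<one> \<ominus> (f \<oplus> f)"
  shows "f \<otimes> (\<one> \<oplus> \<one> \<oplus> \<one> \<ominus> (f \<oplus> f)) \<otimes> f \<ominus> f = x \<otimes> w"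
    and "(f \<otimes> (\<one> \<oplus> \<one> \<oplus> \<one> \<ominus> (f \<oplus> f)) \<otimes> f) \<otimes> (f \<otimes> (\<one> \<oplus> \<one> \<oplus> \<one> \<ominus> (f \<oplus> f)) \<otimes> f)
        \<ominus> (f \<otimes> (\<one> \<oplus> \<one> \<oplus> \<one> \<ominus> (f \<oplus> f)) \<otimes> f) = x \<otimes> x \<otimes> (w \<otimes> w \<ominus> (\<one> \<oplus> \<one> \<oplus> \<one> \<oplus> \<one>))"
proof -
  have xc: "x \<in> carrier R" and wc: "w \<in> carrier R" unfolding x_def w_def using f by auto
  have gdef: "f \<otimes> (\<one> \<oplus> \<one> \<oplus> \<one> \<ominus> (f \<oplus> f)) \<otimes> f = f \<oplus> x \<otimes> w"
    unfolding x_def w_def using f by algebra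
  then show "f \<otimes> (\<one> \<oplus> \<one> \<oplus> \<one> \<ominus> (f \<oplus> f)) \<otimes> f \<ominus> f = x \<otimes> w" using f xc wc by algebra
  have ww: "w \<otimes> w = \<one> \<oplus> (x \<oplus> x \<oplus> x \<oplus> x)" unfolding x_def w_def using f by algebra
  have wf: "w \<otimes> (f \<oplus> f \<ominus> \<one>) = \<ominus> (w \<otimes> w)" unfolding w_def using f by algebra
  have fx: "f \<otimes> f = x \<oplus> f" unfolding x_def using f by algebra
  have A: "(f \<oplus> x \<otimes> w) \<otimes> (f \<oplus> x \<otimes> w) \<ominus> (f \<oplus> x \<otimes> w) =
     (f \<otimes> f \<ominus> f) \<oplus> x \<otimes> (w \<otimes> (f \<oplus> f \<ominus> \<one>)) \<oplus> x \<otimes> x \<otimes> (w \<otimes> w)"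
    using f xc wc by algebra
  also have "\<dots> = x \<oplus> x \<otimes> (\<ominus> (\<one> \<oplus> (x \<oplus> x \<oplus> x \<oplus> x))) \<oplus> x \<otimes> x \<otimes> (w \<otimes> w)"
    unfolding wf fx ww[symmetric] using f xc wc by algebra
  also have "\<dots> = x \<otimes> x \<otimes> (w \<otimes> w \<ominus> (\<one> \<oplus> \<one> \<oplus> \<one> \<oplus> \<one>))"
    using f xc wc by algebra
  finally show "(f \<otimes> (\<one> \<oplus> \<one> \<oplus> \<one> \<ominus> (f \<oplus> f)) \<otimes> f) \<otimes> (f \<otimes> (\<one> \<oplus> \<one> \<oplus> \<one> \<ominus> (f \<oplus> f)) \<otimes> f)
        \<ominus> (f \<otimes> (\<one> \<oplus> \<one> \<oplus> \<one> \<ominus> (f \<oplus> f)) \<otimes> f) = x \<otimes> x \<otimes> (w \<otimes> w \<ominus> (\<one> \<oplus> \<one> \<oplus> \<one> \<oplus> \<one>))"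
    unfolding gdef .
qed
end

context ring begin

lemma step_ring:
  assumes f: "f \<in> carrier R"
  defines "x \<equiv> f \<otimes> f \<ominus> f" and "w \<equiv> \<one> \<ominus> (f \<oplus> f)"
  defines "v \<equiv> w \<otimes> w \<ominus> (\<one> \<oplus> \<one> \<oplus> \<one> \<oplus> \<one>)"
  shows "f \<otimes> (\<one> \<oplus> \<one> \<oplus> \<one> \<ominus> (f \<oplus> f)) \<otimes> f \<ominus> f = x \<otimes> w"
    and "(f \<otimes> (\<one> \<oplus> \<one> \<oplus> \<one> \<ominus> (f \<oplus> f)) \<otimes> f) \<otimes> (f \<otimes> (\<one> \<oplus> \<one> \<oplus> \<one> \<ominus> (f \<oplus> f)) \<otimes> f)
        \<ominus> (f \<otimes> (\<one> \<oplus> \<one> \<oplus> \<one> \<ominus> (f \<oplus> f)) \<otimes> f) = x \<otimes> x \<otimes> v"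
    and "x \<otimes> v = v \<otimes> x"
proof -
  define C where "C = {y \<in> carrier R. \<forall>z\<in>carrier R. z \<otimes> f = f \<otimes> z \<longrightarrow> y \<otimes> z = z \<otimes> y}"
  have Csub: "C \<subseteq> carrier R" unfolding C_def by blast
  have oneC: "\<one> \<in> C" unfolding C_def by simp
  have fC: "f \<in> C" unfolding C_def using f by simp
  have negC: "\<ominus> h \<in> C" if hyp: "h \<in> C" for h
    using hyp unfolding C_def by (auto simp: l_minus r_minus)
  have mulC: "h1 \<otimes> h2 \<in> C" if hyp: "h1 \<in> C" "h2 \<in> C" for h1 h2
    using hyp unfolding C_def by (auto simp: m_assoc) (metis m_assoc)
  have addC: "h1 \<oplus> h2 \<in> C" if hyp: "h1 \<in> C" "h2 \<in> C" for h1 h2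
    using hyp unfolding C_def by (auto simp: l_distr r_distr)
  have comm: "h1 \<otimes> h2 = h2 \<otimes> h1" if hyp: "h1 \<in> C" "h2 \<in> C" for h1 h2
  proof -
    have "h2 \<otimes> f = f \<otimes> h2" using hyp(2) f unfolding C_def by blast
    then show ?thesis using hyp unfolding C_def by blast
  qed
  have "subring C R" by (rule subringI[OF Csub oneC negC mulC addC])
  then have "subcring C R" by (rule subcringI) (rule comm)
  then have "cring (R\<lparr>carrier := C\<rparr>)" using subcring_iff[OF Csub] by blast
  then interpret S: cring "R\<lparr>carrier := C\<rparr>" .
  have invS: "a_inv (R\<lparr>carrier := C\<rparr>) y = \<ominus> y" if hyp: "y \<in> C" for y
  proof -
    have "a_inv (R\<lparr>carrier := C\<rparr>) y \<in> C" using S.a_inv_closed hyp by simp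
    moreover have "a_inv (R\<lparr>carrier := C\<rparr>) y \<oplus> y = \<zero>" using S.l_neg hyp by simp
    ultimately show ?thesis using hyp Csub by (intro minus_equality[symmetric]) auto
  qed
  note cl = oneC fC negC mulC addC
  have xC: "x \<in> C" and wC: "w \<in> C" and vC: "v \<in> C"
    unfolding x_def w_def v_def by (simp_all add: minus_eq cl)
  have fC': "f \<in> carrier (R\<lparr>carrier := C\<rparr>)" using fC by simp
  note st = S.step_comm[OF fC']
  show "f \<otimes> (\<one> \<oplus> \<one> \<oplus> \<one> \<ominus> (f \<oplus> f)) \<otimes> f \<ominus> f = x \<otimes> w"
    using st(1) unfolding x_def w_def by (simp add: a_minus_def invS cl)
  show "(f \<otimes> (\<one> \<oplus> \<one> \<oplus> \<one> \<ominus> (f \<oplus> f)) \<otimes> f) \<otimes> (f \<otimes> (\<one> \<oplus> \<one> \<oplus> \<one> \<ominus> (f \<oplus> f)) \<otimes> f)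
        \<ominus> (f \<otimes> (\<one> \<oplus> \<one> \<oplus> \<one> \<ominus> (f \<oplus> f)) \<otimes> f) = x \<otimes> x \<otimes> v"
    using st(2) unfolding x_def w_def v_def by (simp add: a_minus_def invS cl)
  show "x \<otimes> v = v \<otimes> x" using comm[OF xC vC] .
qed

lemma ideal_facts:
  assumes I: "ideal I R"
  shows "I \<subseteq> carrier R" "\<zero> \<in> I" "\<And>a b. a \<in> I \<Longrightarrow> b \<in> I \<Longrightarrow> a \<oplus> b \<in> I"
    "\<And>a b. a \<in> I \<Longrightarrow> b \<in> I \<Longrightarrow> a \<ominus> b \<in> I"
    "\<And>a x. a \<in> I \<Longrightarrow> x \<in> carrier R \<Longrightarrow> x \<otimes> a \<in> I"
    "\<And>a x. a \<in> I \<Longrightarrow> x \<in> carrier R \<Longrightarrow> a \<otimes> x \<in> I"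
proof -
  interpret I: ideal I R by (rule I)
  show "I \<subseteq> carrier R" by (rule I.a_subset)
  show "\<zero> \<in> I" by simp
  show "\<And>a b. a \<in> I \<Longrightarrow> b \<in> I \<Longrightarrow> a \<oplus> b \<in> I" by simp
  show "\<And>a b. a \<in> I \<Longrightarrow> b \<in> I \<Longrightarrow> a \<ominus> b \<in> I" by (simp add: minus_eq)
  show "\<And>a x. a \<in> I \<Longrightarrow> x \<in> carrier R \<Longrightarrow> x \<otimes> a \<in> I" by (rule I.I_l_closed)
  show "\<And>a x. a \<in> I \<Longrightarrow> x \<in> carrier R \<Longrightarrow> a \<otimes> x \<in> I" by (rule I.I_r_closed)
qed

lemma lift_idem_aux:
  assumes I: "ideal I R" and a: "a \<in> carrier R"
  shows "\<forall>b. b \<in> {a \<otimes> s \<otimes> a | s. s \<in> carrier R} \<longrightarrow> b \<otimes> b \<ominus> b \<in> I \<longrightarrow>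
           (b \<otimes> b \<ominus> b) [^] (n::nat) = \<zero> \<longrightarrow>
           (\<exists>f \<in> {a \<otimes> s \<otimes> a | s. s \<in> carrier R}. f \<otimes> f = f \<and> f \<ominus> b \<in> I)"
proof (induction n rule: less_induct)
  case (less n)
  note If = ideal_facts[OF I]
  show ?case
  proof (intro allI impI)
    fix b assume bA: "b \<in> {a \<otimes> s \<otimes> a | s. s \<in> carrier R}" and bI: "b \<otimes> b \<ominus> b \<in> I"
      and pw: "(b \<otimes> b \<ominus> b) [^] n = \<zero>"
    obtain s where s: "s \<in> carrier R" "b = a \<otimes> s \<otimes> a" using bA by blast
    have bc: "b \<in> carrier R" using s a by simp
    have bzero: "b \<ominus> b \<in> I" using If(2) bc by (simp add: minus_eq r_neg)
    show "\<exists>f \<in> {a \<otimes> s \<otimes> a | s. s \<in> carrier R}. f \<otimes> f = f \<and> f \<ominus> b \<in> I"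
    proof (cases "n \<le> 1")
      case True
      have "b \<otimes> b \<ominus> b = \<zero>"
      proof (cases "n = 0")
        case True
        then have "\<one> = \<zero>" using pw by simp
        then have allz: "\<And>y. y \<in> carrier R \<Longrightarrow> y = \<zero>" by (metis r_one r_null)
        have "b \<otimes> b \<ominus> b \<in> carrier R" using bc by simp
        then show ?thesis by (rule allz)
      next
        case False
        then have "n = 1" using True by simp
        then show ?thesis using pw bc by simp
      qed
      moreover have "b \<otimes> b = (b \<otimes> b \<ominus> b) \<oplus> b" using bc by algebra
      ultimately have "b \<otimes> b = b" using bc by simp
      then show ?thesis using bA bzero by blast
    next
      case False
      define x where "x = b \<otimes> b \<ominus> b"
      define w where "w = \<one> \<ominus> (b \<oplus> b)"
      define v where "v = w \<otimes> w \<ominus> (\<one> \<oplus> \<one> \<oplus> \<one> \<oplus> \<one>)"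
      define g where "g = b \<otimes> (\<one> \<oplus> \<one> \<oplus> \<one> \<ominus> (b \<oplus> b)) \<otimes> b"
      have xc: "x \<in> carrier R" and wc: "w \<in> carrier R" and vc: "v \<in> carrier R"
        unfolding x_def w_def v_def using bc by auto
      note st = step_ring[OF bc, folded x_def w_def v_def g_def]
      have gA: "g \<in> {a \<otimes> s \<otimes> a | s. s \<in> carrier R}"
      proof -
        let ?V = "\<one> \<oplus> \<one> \<oplus> \<one> \<ominus> (b \<oplus> b)"
        have Vc: "?V \<in> carrier R" using bc by simp
        have "g = a \<otimes> (s \<otimes> a \<otimes> ?V \<otimes> a \<otimes> s) \<otimes> a"
          unfolding g_def s(2) using a s(1) Vc by (simp add: m_assoc)
        moreover have "s \<otimes> a \<otimes> ?V \<otimes> a \<otimes> s \<in> carrier R" using a s(1) Vc by simp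
        ultimately show ?thesis by blast
      qed
      have gb: "g \<ominus> b \<in> I" using st(1) If(6) bI wc unfolding x_def by simp
      have st3: "x \<otimes> v = v \<otimes> x" using st(3) unfolding v_def .
      have st2: "g \<otimes> g \<ominus> g = x \<otimes> x \<otimes> v" using st(2) unfolding v_def .
      have xI: "x \<in> I" using bI unfolding x_def .
      have gI: "g \<otimes> g \<ominus> g \<in> I"
        unfolding st2 using If(6)[OF If(6)[OF xI xc] vc] .
      define m where "m = Suc n div 2"
      have mn: "m < n" using False unfolding m_def by simp
      have "(g \<otimes> g \<ominus> g) [^] m = \<zero>"
      proof -
        have comm: "(x \<otimes> x) \<otimes> v = v \<otimes> (x \<otimes> x)"
        proof -
          have "(x \<otimes> x) \<otimes> v = x \<otimes> (x \<otimes> v)" using xc vc by (simp add: m_assoc)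
          also have "\<dots> = x \<otimes> (v \<otimes> x)" using st3 by simp
          also have "\<dots> = (x \<otimes> v) \<otimes> x" using xc vc by (simp add: m_assoc)
          also have "\<dots> = (v \<otimes> x) \<otimes> x" using st3 by simp
          finally show ?thesis using xc vc by (simp add: m_assoc)
        qed
        have "(g \<otimes> g \<ominus> g) [^] m = (x \<otimes> x) [^] m \<otimes> v [^] m"
          using st2 pow_mult_distrib[OF comm] xc vc by simp
        also have "(x \<otimes> x) [^] m = x [^] (m + m)"
          using pow_mult_distrib[of x x m] xc by (simp add: nat_pow_mult)
        also have "x [^] (m + m) = x [^] n \<otimes> x [^] (m + m - n)"
          using xc nat_pow_mult[of x n "m + m - n"] mn unfolding m_def by simp
        also have "\<dots> = \<zero>" using pw xc unfolding x_def[symmetric] by simp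
        finally show ?thesis using vc by simp
      qed
      then obtain f where f: "f \<in> {a \<otimes> s \<otimes> a | s. s \<in> carrier R}" "f \<otimes> f = f" "f \<ominus> g \<in> I"
        using less.IH[OF mn] gA gI by blast
      have fc: "f \<in> carrier R" using f(1) a by auto
      have gc: "g \<in> carrier R" unfolding g_def using bc by simp
      have "f \<ominus> b = (f \<ominus> g) \<oplus> (g \<ominus> b)" using fc gc bc by algebra
      then have "f \<ominus> b \<in> I" using If(3) f(3) gb by simp
      then show ?thesis using f by blast
    qed
  qed
qed

lemma lift_idem:
  assumes I: "ideal I R" and nil: "I \<subseteq> nilps R" and a: "a \<in> carrier R"
    and b: "b \<in> {a \<otimes> s \<otimes> a | s. s \<in> carrier R}" and bI: "b \<otimes> b \<ominus> b \<in> I"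
  shows "\<exists>f \<in> {a \<otimes> s \<otimes> a | s. s \<in> carrier R}. f \<otimes> f = f \<and> f \<ominus> b \<in> I"
proof -
  obtain n where "(b \<otimes> b \<ominus> b) [^] (n::nat) = \<zero>" using bI nil unfolding nilps_def by blast
  then show ?thesis using lift_idem_aux[OF I a, of n] b bI by blast
qed

lemma quot_carrier:
  assumes "X \<in> carrier (R Quot I)" shows "\<exists>x\<in>carrier R. X = I +> x"
  using assms by (auto simp: FactRing_def A_RCOSETS_def')

lemma quot_zero_iff:
  assumes x: "x \<in> carrier R"
  shows "(jacobson R +> x = \<zero>\<^bsub>R Quot jacobson R\<^esub>) \<longleftrightarrow> x \<in> jacobson R"
proof -
  interpret JI: ideal "jacobson R" R by (rule J_ideal)
  show ?thesis
  proof
    assume "jacobson R +> x = \<zero>\<^bsub>R Quot jacobson R\<^esub>"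
    then have "jacobson R +> x = jacobson R" by (simp add: FactRing_def)
    then show "x \<in> jacobson R" using JI.a_rcos_self[OF x] by simp
  next
    assume "x \<in> jacobson R"
    then show "jacobson R +> x = \<zero>\<^bsub>R Quot jacobson R\<^esub>"
      using JI.a_rcos_const by (simp add: FactRing_def)
  qed
qed
end

theorem lemma2p1:
  fixes R (structure)
  assumes "ring R" and "\<one>\<^bsub>R\<^esub> \<noteq> \<zero>\<^bsub>R\<^esub>"
  shows "D_regularly_nil_clean R \<longleftrightarrow>
           D_regularly_nil_clean (R Quot (jacobson R)) \<and> nil_ideal R (jacobson R)"
proof -
  interpret ring R by fact
  let ?J = "jacobson R"
  let ?Q = "R Quot ?J"
  let ?h = "(+>) ?J"
  interpret JI: ideal ?J R by (rule J_ideal)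
  interpret H: ring_hom_ring R ?Q ?h by (rule JI.rcos_ring_hom_ring)
  have Jc: "?J \<subseteq> carrier R" unfolding jacobson_def by blast
  have hminus: "\<And>x y. x \<in> carrier R \<Longrightarrow> y \<in> carrier R \<Longrightarrow> ?h (x \<ominus> y) = ?h x \<ominus>\<^bsub>?Q\<^esub> ?h y"
    by (simp add: minus_eq H.S.minus_eq)
  show ?thesis
  proof
    assume D: "D_regularly_nil_clean R"
    have nil: "nil_ideal R ?J"
      unfolding nil_ideal_def
    proof
      fix a assume aJ: "a \<in> ?J"
      have ac: "a \<in> carrier R" using aJ Jc by blast
      obtain e where e: "e \<in> {a \<otimes> r \<otimes> a | r. r \<in> carrier R}" "e \<in> idems R"
          "a \<otimes> (\<one> \<ominus> e) \<in> nilps R"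
        using D ac unfolding D_regularly_nil_clean_def by blast
      obtain r where r: "r \<in> carrier R" "e = a \<otimes> r \<otimes> a" using e(1) by blast
      have "e \<in> ?J" using r JI.I_l_closed[OF aJ, of "a \<otimes> r"] ac by simp
      moreover have "e \<otimes> e = e" using e(2) unfolding idems_def by blast
      ultimately have "e = \<zero>" by (rule J_idem_zero)
      then show "a \<in> nilps R" using e(3) ac by (simp add: minus_eq)
    qed
    have "D_regularly_nil_clean ?Q"
      unfolding D_regularly_nil_clean_def
    proof
      fix X assume X: "X \<in> carrier ?Q"
      obtain a where a: "a \<in> carrier R" "X = ?h a" using quot_carrier[OF X] by blast
      obtain e where e: "e \<in> {a \<otimes> r \<otimes> a | r. r \<in> carrier R}" "e \<in> idems R"
          "a \<otimes> (\<one> \<ominus> e) \<in> nilps R"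
        using D a(1) unfolding D_regularly_nil_clean_def by blast
      obtain r where r: "r \<in> carrier R" "e = a \<otimes> r \<otimes> a" using e(1) by blast
      have ec: "e \<in> carrier R" using r a by simp
      have E1: "?h e \<in> {X \<otimes>\<^bsub>?Q\<^esub> Y \<otimes>\<^bsub>?Q\<^esub> X | Y. Y \<in> carrier ?Q}"
        using r a by (auto intro!: exI[of _ "?h r"])
      have E2: "?h e \<in> idems ?Q"
        using e(2) ec unfolding idems_def by (simp flip: H.hom_mult)
      obtain n where n: "(a \<otimes> (\<one> \<ominus> e)) [^] (n::nat) = \<zero>" using e(3) unfolding nilps_def by blast
      have "X \<otimes>\<^bsub>?Q\<^esub> (\<one>\<^bsub>?Q\<^esub> \<ominus>\<^bsub>?Q\<^esub> ?h e) = ?h (a \<otimes> (\<one> \<ominus> e))"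
        using a ec by (simp add: hminus)
      moreover have "(?h (a \<otimes> (\<one> \<ominus> e))) [^]\<^bsub>?Q\<^esub> n = \<zero>\<^bsub>?Q\<^esub>"
      proof -
        have yc0: "a \<otimes> (\<one> \<ominus> e) \<in> carrier R" using a ec by simp
        have "(?h (a \<otimes> (\<one> \<ominus> e))) [^]\<^bsub>?Q\<^esub> n = ?h ((a \<otimes> (\<one> \<ominus> e)) [^] n)"
          by (rule H.hom_nat_pow[OF yc0, symmetric])
        also have "\<dots> = ?h \<zero>" using n by simp
        also have "\<dots> = \<zero>\<^bsub>?Q\<^esub>" by simp
        finally show ?thesis .
      qed
      ultimately have E3: "X \<otimes>\<^bsub>?Q\<^esub> (\<one>\<^bsub>?Q\<^esub> \<ominus>\<^bsub>?Q\<^esub> ?h e) \<in> nilps ?Q"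
        unfolding nilps_def using a ec by auto
      show "\<exists>E \<in> {X \<otimes>\<^bsub>?Q\<^esub> Y \<otimes>\<^bsub>?Q\<^esub> X | Y. Y \<in> carrier ?Q} \<inter> idems ?Q.
              X \<otimes>\<^bsub>?Q\<^esub> (\<one>\<^bsub>?Q\<^esub> \<ominus>\<^bsub>?Q\<^esub> E) \<in> nilps ?Q"
        using E1 E2 E3 by blast
    qed
    then show "D_regularly_nil_clean ?Q \<and> nil_ideal R ?J" using nil by blast
  next
    assume A: "D_regularly_nil_clean ?Q \<and> nil_ideal R ?J"
    have nil: "?J \<subseteq> nilps R" using A unfolding nil_ideal_def by blast
    show "D_regularly_nil_clean R"
      unfolding D_regularly_nil_clean_def
    proof
      fix a assume a: "a \<in> carrier R"
      have ha: "?h a \<in> carrier ?Q" using a by simp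
      obtain E where E: "E \<in> {?h a \<otimes>\<^bsub>?Q\<^esub> Y \<otimes>\<^bsub>?Q\<^esub> ?h a | Y. Y \<in> carrier ?Q}" "E \<in> idems ?Q"
          "?h a \<otimes>\<^bsub>?Q\<^esub> (\<one>\<^bsub>?Q\<^esub> \<ominus>\<^bsub>?Q\<^esub> E) \<in> nilps ?Q"
        using A ha unfolding D_regularly_nil_clean_def by blast
      obtain Y where Y: "Y \<in> carrier ?Q" "E = ?h a \<otimes>\<^bsub>?Q\<^esub> Y \<otimes>\<^bsub>?Q\<^esub> ?h a" using E(1) by blast
      obtain r where r: "r \<in> carrier R" "Y = ?h r" using quot_carrier[OF Y(1)] by blast
      define b where "b = a \<otimes> r \<otimes> a"
      have bc: "b \<in> carrier R" unfolding b_def using a r by simp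
      have Eb: "E = ?h b" unfolding b_def using Y r a by simp
      have "?h (b \<otimes> b \<ominus> b) = \<zero>\<^bsub>?Q\<^esub>"
        using E(2) bc unfolding Eb idems_def by (simp add: hminus)
      then have bI: "b \<otimes> b \<ominus> b \<in> ?J" using quot_zero_iff bc by simp
      have bA: "b \<in> {a \<otimes> s \<otimes> a | s. s \<in> carrier R}" unfolding b_def using r by blast
      obtain f where f: "f \<in> {a \<otimes> s \<otimes> a | s. s \<in> carrier R}" "f \<otimes> f = f" "f \<ominus> b \<in> ?J"
        using lift_idem[OF J_ideal nil a bA bI] by blast
      have fc: "f \<in> carrier R" using f(1) a by auto
      have "?h (f \<ominus> b) = \<zero>\<^bsub>?Q\<^esub>" using quot_zero_iff f(3) fc bc by simp
      then have "?h f \<ominus>\<^bsub>?Q\<^esub> ?h b = \<zero>\<^bsub>?Q\<^esub>" using fc bc by (simp add: hminus)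
      then have hfb: "?h f = ?h b" using fc bc by (simp add: H.S.r_right_minus_eq)
      obtain n where n: "(?h a \<otimes>\<^bsub>?Q\<^esub> (\<one>\<^bsub>?Q\<^esub> \<ominus>\<^bsub>?Q\<^esub> E)) [^]\<^bsub>?Q\<^esub> (n::nat) = \<zero>\<^bsub>?Q\<^esub>"
        using E(3) unfolding nilps_def by blast
      define y where "y = a \<otimes> (\<one> \<ominus> f)"
      have yc: "y \<in> carrier R" unfolding y_def using a fc by simp
      have "?h y = ?h a \<otimes>\<^bsub>?Q\<^esub> (\<one>\<^bsub>?Q\<^esub> \<ominus>\<^bsub>?Q\<^esub> E)"
        unfolding y_def Eb using a fc hfb by (simp add: hminus)
      then have "?h (y [^] n) = \<zero>\<^bsub>?Q\<^esub>" using n H.hom_nat_pow[OF yc, of n] by simp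
      then have "y [^] n \<in> ?J" using quot_zero_iff yc by simp
      then obtain m where m: "(y [^] n) [^] (m::nat) = \<zero>" using nil unfolding nilps_def by blast
      have "y [^] (n * m) = \<zero>" using m yc by (simp add: nat_pow_pow)
      then have "y \<in> nilps R" using yc unfolding nilps_def by blast
      moreover have "f \<in> idems R" using f(2) fc unfolding idems_def by blast
      ultimately show "\<exists>e \<in> {a \<otimes> r \<otimes> a | r. r \<in> carrier R} \<inter> idems R. a \<otimes> (\<one> \<ominus> e) \<in> nilps R"
        using f(1) unfolding y_def by blast
    qed
  qed
qed

end
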